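(* Let $k\geq 1$ and $g\geq 0$ be integers, let $a<b$, and let $a=\lambda_0<\lambda_1<\cdots<\lambda_g<\lambda_{g+1}=b$. Extend the knot sequence by coincident additional knots $\lambda_{-k}=\cdots=\lambda_{-1}=\lambda_0=a$ and $b=\lambda_{g+1}=\lambda_{g+2}=\cdots=\lambda_{g+k+1}$. Let $B_i^{k+1}$, $i=-k,\dots,g$, be the normalized B-splines of degree $k$ (order $k+1$) on this extended knot sequence, and for $i=-k,\dots,g-1$ define $$Z_i^{k+1}(x)=(k+1)\left(\frac{B_i^{k+1}(x)}{\lambda_{i+k+1}-\lambda_i}-\frac{B_{i+1}^{k+1}(x)}{\lambda_{i+k+2}-\lambda_{i+1}}\right),\qquad x\in[a,b].$$ Then the functions $Z_{-k}^{k+1},\dots,Z_{g-1}^{k+1}$ form a basis of the space $$\mathcal{Z}_k^{\Delta\lambda}[a,b]=\Big\{s\in \mathcal{S}_k^{\Delta\lambda}[a,b] \;:\; \int_a^b s(x)\,\mathrm{d}x=0\Big\}.$$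
   Context: $\mathcal{S}_k^{\Delta\lambda}[a,b]$ is the space of functions on $[a,b]$ that are polynomials of degree at most $k$ on each $[\lambda_i,\lambda_{i+1}]$, $i=0,\dots,g$, and are $k-1$ times continuously differentiable on $[a,b]$. Normalized B-splines are defined by the Cox–de Boor recursion: $B_i^1(x)=1$ if $x\in[\lambda_i,\lambda_{i+1})$ and $0$ otherwise (with the usual convention at the right endpoint $b$), and $B_i^{m+1}(x)=\frac{x-\lambda_i}{\lambda_{i+m}-\lambda_i}B_i^m(x)+\frac{\lambda_{i+m+1}-x}{\lambda_{i+m+1}-\lambda_{i+1}}B_{i+1}^m(x)$, with the convention that terms with zero denominator are omitted. The function $Z_i^{k+1}$ coincides with the derivative of the B-spline $B_i^{k+2}$; the denominators $\lambda_{i+k+1}-\lambda_i$ for $i=-k,\dots,g$ are positive. *)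

theory Defs
  imports "HOL-Analysis.Analysis" "HOL-Computational_Algebra.Polynomial"
begin

text \<open>Normalized B-splines via the Cox--de Boor recursion on the knot sequence lam.
  bspline b lam m i x is B_i^m(x).  The order-1 B-spline is the indicator of
  [lam i, lam (i+1)), with the usual convention at the right endpoint b: it also
  takes the value 1 at x = b when lam i < lam (i+1) = b.
  Terms with zero denominator are omitted.\<close>
fun bspline :: "real \<Rightarrow> (int \<Rightarrow> real) \<Rightarrow> nat \<Rightarrow> int \<Rightarrow> real \<Rightarrow> real" where
  "bspline b lam 0 i x = 0"
| "bspline b lam (Suc 0) i x =
     (if (lam i \<le> x \<and> x < lam (i+1)) \<or> (x = b \<and> lam i < b \<and> lam (i+1) = b) then 1 else 0)"
| "bspline b lam (Suc (Suc m)) i x =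
     (if lam (i + int (Suc m)) - lam i = 0 then 0
      else (x - lam i) / (lam (i + int (Suc m)) - lam i) * bspline b lam (Suc m) i x)
   + (if lam (i + int (Suc m) + 1) - lam (i+1) = 0 then 0
      else (lam (i + int (Suc m) + 1) - x) / (lam (i + int (Suc m) + 1) - lam (i+1))
           * bspline b lam (Suc m) (i+1) x)"

definition Zfun :: "real \<Rightarrow> (int \<Rightarrow> real) \<Rightarrow> nat \<Rightarrow> int \<Rightarrow> real \<Rightarrow> real" where
  "Zfun b lam k i x = real (k+1) *
     (bspline b lam (k+1) i x / (lam (i + int k + 1) - lam i)
      - bspline b lam (k+1) (i+1) x / (lam (i + int k + 2) - lam (i+1)))"

definition Cn_on :: "nat \<Rightarrow> real set \<Rightarrow> (real \<Rightarrow> real) \<Rightarrow> bool" where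
  "Cn_on n S s \<longleftrightarrow> (\<exists>D :: nat \<Rightarrow> real \<Rightarrow> real.
      (\<forall>x\<in>S. D 0 x = s x) \<and>
      (\<forall>j\<le>n. continuous_on S (D j)) \<and>
      (\<forall>j<n. \<forall>x\<in>S. (D j has_real_derivative D (Suc j) x) (at x within S)))"

definition spline_space :: "nat \<Rightarrow> nat \<Rightarrow> (int \<Rightarrow> real) \<Rightarrow> real \<Rightarrow> real \<Rightarrow> (real \<Rightarrow> real) set" where
  "spline_space k g lam a b = {s.
      (\<forall>i::int. 0 \<le> i \<and> i \<le> int g \<longrightarrow>
         (\<exists>p :: real poly. degree p \<le> k \<and> (\<forall>x\<in>{lam i..lam (i+1)}. s x = poly p x)))
      \<and> Cn_on (k - 1) {a..b} s}"

definition zero_int_spline_space :: "nat \<Rightarrow> nat \<Rightarrow> (int \<Rightarrow> real) \<Rightarrow> real \<Rightarrow> real \<Rightarrow> (real \<Rightarrow> real) set" where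
  "zero_int_spline_space k g lam a b =
     {s \<in> spline_space k g lam a b. integral {a..b} s = 0}"

end

theory Submission
  imports Defs "HOL-Library.Function_Algebras"
begin


fun bp :: "(int \<Rightarrow> real) \<Rightarrow> nat \<Rightarrow> int \<Rightarrow> int \<Rightarrow> real poly" where
  "bp lam 0 i j = 0"
| "bp lam (Suc 0) i j = (if i = j then 1 else 0)"
| "bp lam (Suc (Suc m)) i j =
     smult (1 / (lam (i + int (Suc m)) - lam i)) [:- lam i, 1:] * bp lam (Suc m) i j
   + smult (1 / (lam (i + int (Suc m) + 1) - lam (i+1))) [:lam (i + int (Suc m) + 1), -1:] * bp lam (Suc m) (i+1) j"

locale knots =
  fixes lam :: "int \<Rightarrow> real" and g :: nat and a b :: real
  assumes lam_le0: "i \<le> 0 \<Longrightarrow> lam i = a"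
  and lam_geg: "int g + 1 \<le> i \<Longrightarrow> lam i = b"
  and lam_strict: "0 \<le> i \<Longrightarrow> i \<le> int g \<Longrightarrow> lam i < lam (i+1)"
begin

lemma lam_step: "lam i \<le> lam (i+1)"
proof (cases "i < 0")
  case True then show ?thesis using lam_le0[of i] lam_le0[of "i+1"] by simp
next
  case False
  show ?thesis
  proof (cases "i \<le> int g")
    case True then show ?thesis using lam_strict[of i] False by simp
  next
    case False then show ?thesis using lam_geg[of i] lam_geg[of "i+1"] by simp
  qed
qed

lemma lam_mono_aux: "lam i \<le> lam (i + int n)"
proof (induction n)
  case 0 then show ?case by simp
next
  case (Suc n)
  have "i + int (Suc n) = (i + int n) + 1" by simp
  then show ?case using Suc lam_step[of "i + int n"] by (metis order_trans)
qed

lemma lam_mono: "i \<le> l \<Longrightarrow> lam i \<le> lam l"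
  using lam_mono_aux[of i "nat (l - i)"] by simp

lemma lam_less: "i < l \<Longrightarrow> i \<le> int g \<Longrightarrow> 1 \<le> l \<Longrightarrow> lam i < lam l"
proof -
  assume h: "i < l" "i \<le> int g" "1 \<le> l"
  define j where "j = max i 0"
  have "lam i \<le> lam j" using lam_mono[of i j] by (simp add: j_def)
  also have "lam j < lam (j+1)" using lam_strict[of j] h by (simp add: j_def)
  also have "lam (j+1) \<le> lam l" using lam_mono[of "j+1" l] h by (simp add: j_def)
  finally show ?thesis .
qed

lemma a_less_b: "a < b"
  using lam_less[of 0 "int g + 1"] lam_le0[of 0] lam_geg[of "int g + 1"] by simp

lemma lam_ge_a: "a \<le> lam i" using lam_mono[of 0 i] lam_le0[of 0] lam_mono[of i 0] lam_le0[of i]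
  by (cases "0 \<le> i") auto

lemma lam_le_b: "lam i \<le> b" using lam_mono[of i "int g + 1"] lam_geg[of "int g + 1"] lam_mono[of "int g+1" i] lam_geg[of i]
  by (cases "i \<le> int g + 1") auto

lemma lam_lt_b: "i \<le> int g \<Longrightarrow> lam i < b"
  using lam_less[of i "int g + 1"] lam_geg[of "int g + 1"] by simp

lemma lam_eq_b_iff: "lam i = b \<longleftrightarrow> int g + 1 \<le> i"
  using lam_lt_b[of i] lam_geg[of i] by force

definition inpiece :: "int \<Rightarrow> real \<Rightarrow> bool" where
  "inpiece j x \<longleftrightarrow> 0 \<le> j \<and> j \<le> int g \<and> ((lam j \<le> x \<and> x < lam (j+1)) \<or> (j = int g \<and> x = b))"

lemma bspline1_piece:
  assumes "inpiece j x"
  shows "bspline b lam (Suc 0) i x = (if i = j then 1 else 0)"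
proof -
  consider "lam j \<le> x" "x < lam (j+1)" "0 \<le> j" "j \<le> int g" | "j = int g" "x = b"
    using assms unfolding inpiece_def by blast
  then show ?thesis
  proof cases
    case 1
    have xb: "x \<noteq> b" using 1 lam_le_b[of "j+1"] by auto
    have "(lam i \<le> x \<and> x < lam (i+1)) \<longleftrightarrow> i = j"
    proof
      assume h: "lam i \<le> x \<and> x < lam (i+1)"
      show "i = j"
      proof (rule ccontr)
        assume "i \<noteq> j"
        then consider "i < j" | "j < i" by linarith
        then show False
        proof cases
          case 1 then have "lam (i+1) \<le> lam j" using lam_mono by simp
          then show False using h \<open>lam j \<le> x\<close> by simp
        next
          case 2 then have "lam (j+1) \<le> lam i" using lam_mono by simp
          then show False using h \<open>x < lam (j+1)\<close> by simp
        qed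
      qed
    qed (use 1 in auto)
    then show ?thesis using xb by simp
  next
    case 2
    have "\<not> (lam i \<le> x \<and> x < lam (i+1))" using 2 lam_le_b[of "i+1"] by auto
    moreover have "(lam i < b \<and> lam (i+1) = b) \<longleftrightarrow> i = j"
      using 2 lam_eq_b_iff[of "i+1"] lam_eq_b_iff[of i] lam_le_b[of i] by force
    ultimately show ?thesis using 2 by auto
  qed
qed

lemma ifdiv: "(if h = 0 then 0 else c / h * B) = (1/h) * c * (B::real)" by simp

lemma bspline_poly:
  assumes "inpiece j x"
  shows "bspline b lam m i x = poly (bp lam m i j) x"
proof (cases m)
  case 0 then show ?thesis by simp
next
  case (Suc n)
  have "\<forall>i. bspline b lam (Suc n) i x = poly (bp lam (Suc n) i j) x"
  proof (induction n)
    case 0 then show ?case using bspline1_piece[OF assms] by simp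
  next
    case (Suc n)
    show ?case
    proof
      fix i
      show "bspline b lam (Suc (Suc n)) i x = poly (bp lam (Suc (Suc n)) i j) x"
        using Suc.IH[rule_format, of i] Suc.IH[rule_format, of "i+1"]
        by (simp only: bspline.simps bp.simps poly_add poly_mult poly_smult ifdiv) (simp add: algebra_simps)
    qed
  qed
  then show ?thesis using Suc by simp
qed

end


lemma alg1: fixes x :: real assumes "c1 * d0 * (lm1 - l0) = c1" "c1 * d1 * (lm2 - l1) = c1" shows "
d0 * (- l0 + x * (1 + x * 0)) *
     (m *
      (c0 * B0 - c1 * B1)) +
     (c0 * (- l0 + x * (1 + x * 0)) * B0 +
      c1 * (lm1 + x * (- 1 + x * 0)) * B1) *
     (d0 * (1 + x * 0 + (0 + x * (0 + (0 + x * 0))))) +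
     (d1 * (lm2 + x * (- 1 + x * 0)) *
      (m *
       (c1 * B1 -
        c2 * B2)) +
      (c1 * (- l1 + x * (1 + x * 0)) * B1 +
       c2 * (lm2 + x * (- 1 + x * 0)) * B2) *
      (d1 * (- 1 + x * 0 + (0 + x * (0 + (0 + x * 0)))))) =
     (1 + m) *
     (d0 *
      (c0 * (- l0 + x * (1 + x * 0)) * B0 +
       c1 * (lm1 + x * (- 1 + x * 0)) * B1) -
      d1 *
      (c1 * (- l1 + x * (1 + x * 0)) * B1 +
       c2 * (lm2 + x * (- 1 + x * 0)) *
       B2))" (is "?L = ?R")
proof -
  have "?L - ?R = m*B1*((c1*d1*(lm2-l1) - c1) - (c1*d0*(lm1-l0) - c1))" by (simp add: algebra_simps)
  then show ?thesis using assms by simp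
qed

context knots begin

lemma bp_rec: "0 < m \<Longrightarrow> bp lam (Suc m) i j =
   smult (1/(lam (i + int m) - lam i)) [:-lam i, 1:] * bp lam m i j
 + smult (1/(lam (i + 1 + int m) - lam (i+1))) [:lam (i + 1 + int m), -1:] * bp lam m (i+1) j"
  by (cases m) (simp_all add: ac_simps)

lemma bp_deriv: "pderiv (bp lam (Suc m) i j) = smult (real m)
   (smult (1/(lam (i + int m) - lam i)) (bp lam m i j)
  - smult (1/(lam (i + 1 + int m) - lam (i+1))) (bp lam m (i+1) j))"
proof (induction m arbitrary: i)
  case 0 then show ?case by simp
next
  case (Suc m)
  note e0 = bp_rec[of "Suc m" i j, simplified]
  show ?case
  proof (cases "m = 0")
    case True
    then show ?thesis by (simp add: pderiv_add pderiv_mult pderiv_smult pderiv_pCons algebra_simps)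
  next
    case False
    define c0 where "c0 = 1/(lam (i + int m) - lam i)"
    define c1 where "c1 = 1/(lam (i + 1 + int m) - lam (i+1))"
    define c2 where "c2 = 1/(lam (i + 2 + int m) - lam (i+2))"
    define d0 where "d0 = 1/(lam (i + 1 + int m) - lam i)"
    define d1 where "d1 = 1/(lam (i + 2 + int m) - lam (i+1))"
    define lm1 where "lm1 = lam (i + 1 + int m)"
    define lm2 where "lm2 = lam (i + 2 + int m)"
    have r0: "bp lam (Suc m) i j = smult c0 [:-lam i, 1:] * bp lam m i j + smult c1 [:lm1, -1:] * bp lam m (i+1) j"
      using bp_rec[of m i j] False by (simp add: c0_def c1_def lm1_def)
    have r1: "bp lam (Suc m) (i+1) j = smult c1 [:-lam (i+1), 1:] * bp lam m (i+1) j + smult c2 [:lm2, -1:] * bp lam m (i+2) j"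
      using bp_rec[of m "i+1" j] False by (simp add: c1_def c2_def lm2_def ac_simps)
    have e0': "bp lam (Suc (Suc m)) i j = smult d0 [:-lam i, 1:] * bp lam (Suc m) i j + smult d1 [:lm2, -1:] * bp lam (Suc m) (i+1) j"
      using e0 by (simp add: d0_def d1_def lm2_def ac_simps)
    have ih0: "pderiv (bp lam (Suc m) i j) = smult (real m) (smult c0 (bp lam m i j) - smult c1 (bp lam m (i+1) j))"
      using Suc.IH[of i] by (simp add: c0_def c1_def)
    have ih1: "pderiv (bp lam (Suc m) (i+1) j) = smult (real m) (smult c1 (bp lam m (i+1) j) - smult c2 (bp lam m (i+2) j))"
      using Suc.IH[of "i+1"] by (simp add: c1_def c2_def ac_simps)
    have rhs: "smult (real (Suc m))
          (smult (1 / (lam (i + int (Suc m)) - lam i)) (bp lam (Suc m) i j) -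
           smult (1 / (lam (i + 1 + int (Suc m)) - lam (i + 1))) (bp lam (Suc m) (i + 1) j))
        = smult (real (Suc m)) (smult d0 (bp lam (Suc m) i j) - smult d1 (bp lam (Suc m) (i + 1) j))"
      by (simp add: d0_def d1_def ac_simps)
    have h1: "c1 * d0 * (lm1 - lam i) = c1"
    proof (cases "c1 = 0")
      case False
      then have "lam (i + 1 + int m) - lam (i+1) \<noteq> 0" by (auto simp: c1_def)
      then have "lam (i + 1 + int m) - lam i \<noteq> 0" using lam_mono[of i "i+1"] lam_mono[of "i+1" "i+1+int m"] by auto
      then show ?thesis by (simp add: d0_def lm1_def)
    qed simp
    have h2: "c1 * d1 * (lm2 - lam (i+1)) = c1"
    proof (cases "c1 = 0")
      case False
      then have "lam (i + 1 + int m) - lam (i+1) \<noteq> 0" by (auto simp: c1_def)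
      then have "lam (i + 2 + int m) - lam (i+1) \<noteq> 0" using lam_mono[of "i+1" "i+1+int m"] lam_mono[of "i + 1 + int m" "i+2+int m"] by auto
      then show ?thesis by (simp add: d1_def lm2_def)
    qed simp
    show ?thesis unfolding rhs
    proof (rule poly_eq_poly_eq_iff[THEN iffD1], rule ext)
      fix x
      show "poly (pderiv (bp lam (Suc (Suc m)) i j)) x = poly (smult (real (Suc m)) (smult d0 (bp lam (Suc m) i j) - smult d1 (bp lam (Suc m) (i + 1) j))) x"
        unfolding e0' pderiv_add pderiv_mult pderiv_smult pderiv_pCons ih0 ih1
        unfolding r0 r1 poly_add poly_mult poly_smult poly_pCons poly_diff pderiv_0 poly_minus of_nat_Suc poly_0
        by (rule alg1[OF h1 h2])
    qed
  qed
qed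

end


lemma higher_pderiv_diff: "(pderiv ^^ n) (p - q) = (pderiv ^^ n) p - (pderiv ^^ n) (q::real poly)"
  by (induction n arbitrary: p q) (simp_all del: funpow.simps add: funpow_Suc_right pderiv_diff)

context knots begin

lemma bp_degree: "degree (bp lam m i j) \<le> m - 1"
proof (induction m arbitrary: i rule: nat_less_induct)
  case (1 m)
  show ?case
  proof (cases "m < 2")
    case True then show ?thesis by (cases m) auto
  next
    case False
    then obtain n where m: "m = Suc n" "0 < n" by (cases m) auto
    have d0: "degree (bp lam n i j) \<le> n - 1" "degree (bp lam n (i+1) j) \<le> n - 1" using 1 m by auto
    have "degree (smult (1/(lam (i + int n) - lam i)) [:-lam i, 1:] * bp lam n i j) \<le> 1 + (n - 1)"
      by (rule order_trans[OF degree_mult_le]) (use d0 degree_smult_le[of _ "[:-lam i, 1:]"] in auto)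
    moreover have "degree (smult (1/(lam (i + 1 + int n) - lam (i+1))) [:lam (i + 1 + int n), -1:] * bp lam n (i+1) j) \<le> 1 + (n - 1)"
      by (rule order_trans[OF degree_mult_le]) (use d0 degree_smult_le[of _ "[:lam (i + 1 + int n), -1:]"] in auto)
    ultimately have "degree (smult (1/(lam (i + int n) - lam i)) [:-lam i, 1:] * bp lam n i j
      + smult (1/(lam (i + 1 + int n) - lam (i+1))) [:lam (i + 1 + int n), -1:] * bp lam n (i+1) j) \<le> n"
      using m by (intro degree_add_le) auto
    then show ?thesis unfolding m bp_rec[OF m(2)] by simp
  qed
qed

lemma bp_support: "j < i \<or> i + int m \<le> j \<Longrightarrow> bp lam m i j = 0"
proof (induction m arbitrary: i)
  case 0 then show ?case by simp
next
  case (Suc m)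
  show ?case
  proof (cases "m = 0")
    case True then show ?thesis using Suc.prems by auto
  next
    case False
    have "bp lam m i j = 0" "bp lam m (i+1) j = 0" using Suc by auto
    then show ?thesis using False by (simp add: bp_rec)
  qed
qed

lemma bp_cont:
  assumes "2 \<le> m" "1 \<le> j" "j \<le> int g"
  shows "poly (bp lam m i (j-1)) (lam j) = poly (bp lam m i j) (lam j)"
proof -
  obtain n where n: "m = n + 2" using assms(1) by (metis add.commute le_iff_add)
  have "\<forall>i. poly (bp lam (n+2) i (j-1)) (lam j) = poly (bp lam (n+2) i j) (lam j)"
  proof (induction n)
    case 0
    have p1: "lam (j-1) < lam j" using lam_strict[of "j-1"] assms by simp
    have p2: "lam j < lam (j+1)" using lam_strict[of "j"] assms by simp
    show ?case
    proof
      fix i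
      consider "i = j - 1" | "i = j" | "i = j - 2" | "i \<noteq> j - 1" "i \<noteq> j" "i \<noteq> j - 2" by blast
      then show "poly (bp lam (0+2) i (j-1)) (lam j) = poly (bp lam (0+2) i j) (lam j)"
      proof cases
        case 1 then show ?thesis using p1 p2 by (simp add: numeral_2_eq_2 diff_divide_distrib[symmetric])
      next
        case 2 then show ?thesis using p1 p2 by (simp add: numeral_2_eq_2 diff_divide_distrib[symmetric])
      next
        case 3 then show ?thesis using p1 p2 by (simp add: numeral_2_eq_2 diff_divide_distrib[symmetric])
      next
        case 4 then show ?thesis by (simp add: numeral_2_eq_2)
      qed
    qed
  next
    case (Suc n)
    show ?case
    proof
      fix i
      have e: "\<And>jj. bp lam (Suc n + 2) i jj = smult (1/(lam (i + int (n+2)) - lam i)) [:-lam i, 1:] * bp lam (n+2) i jj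
 + smult (1/(lam (i + 1 + int (n+2)) - lam (i+1))) [:lam (i + 1 + int (n+2)), -1:] * bp lam (n+2) (i+1) jj"
        using bp_rec[of "n+2"] by simp
      show "poly (bp lam (Suc n + 2) i (j-1)) (lam j) = poly (bp lam (Suc n + 2) i j) (lam j)"
        by (simp only: e poly_add poly_mult Suc.IH[rule_format])
    qed
  qed
  then show ?thesis using n by simp
qed

lemma bp_smooth:
  assumes "r + 2 \<le> m" "1 \<le> j" "j \<le> int g"
  shows "poly ((pderiv ^^ r) (bp lam m i (j-1))) (lam j) = poly ((pderiv ^^ r) (bp lam m i j)) (lam j)"
  using assms(1)
proof (induction r arbitrary: m i)
  case 0 then show ?case using bp_cont assms by simp
next
  case (Suc r)
  then obtain m' where m: "m = Suc m'" "r + 2 \<le> m'" by (cases m) auto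
  show ?case
    unfolding m funpow_Suc_right o_apply bp_deriv higher_pderiv_smult higher_pderiv_diff poly_smult poly_diff
    using Suc.IH[OF m(2), of i] Suc.IH[OF m(2), of "i+1"] by simp
qed

lemma bp_at_a: "1 \<le> m \<Longrightarrow> poly (bp lam m i 0) a = (if i = 1 - int m then 1 else 0)"
proof (induction m arbitrary: i)
  case 0 then show ?case by simp
next
  case (Suc m)
  show ?case
  proof (cases "m = 0")
    case True then show ?thesis by simp
  next
    case False
    have IH: "\<And>i. poly (bp lam m i 0) a = (if i = 1 - int m then 1 else 0)" using Suc False by simp
    have l1: "lam 1 > a" using lam_strict[of 0] lam_le0[of 0] by simp
    consider "i = 1 - int m" | "i = - int m" | "i \<noteq> 1 - int m" "i \<noteq> - int m" by blast
    then show ?thesis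
    proof cases
      case 1 then show ?thesis using False by (simp add: bp_rec IH lam_le0)
    next
      case 2 
      have "lam (i+1) = a" using 2 False by (simp add: lam_le0)
      moreover have "i + 1 + int m = 1" using 2 by simp
      ultimately show ?thesis using 2 False l1 by (simp add: bp_rec IH diff_divide_distrib[symmetric])
    next
      case 3 then show ?thesis using False by (simp add: bp_rec IH)
    qed
  qed
qed

lemma bp_at_b: "1 \<le> m \<Longrightarrow> poly (bp lam m i (int g)) b = (if i = int g then 1 else 0)"
proof (induction m arbitrary: i)
  case 0 then show ?case by simp
next
  case (Suc m)
  show ?case
  proof (cases "m = 0")
    case True then show ?thesis by simp
  next
    case False
    have IH: "\<And>i. poly (bp lam m i (int g)) b = (if i = int g then 1 else 0)" using Suc False by simp
    have lg: "lam (int g) < b" using lam_lt_b[of "int g"] by simp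
    consider "i = int g" | "i = int g - 1" | "i \<noteq> int g" "i \<noteq> int g - 1" by blast
    then show ?thesis
    proof cases
      case 1
      have "lam (i + int m) = b" using 1 False by (simp add: lam_geg)
      then show ?thesis using 1 False lg by (simp add: bp_rec IH diff_divide_distrib[symmetric])
    next
      case 2
      have "lam (i + 1 + int m) = b" using 2 False by (simp add: lam_geg)
      then show ?thesis using 2 False by (simp add: bp_rec IH)
    next
      case 3 then show ?thesis using False by (simp add: bp_rec IH)
    qed
  qed
qed

end


lemma deriv_Union_closed:
  assumes "finite I" "\<forall>i\<in>I. closed (U i)"
    "\<forall>i\<in>I. x \<in> U i \<longrightarrow> (f has_field_derivative f') (at x within U i)"
  shows "(f has_field_derivative f') (at x within \<Union>(U ` I))"
  using assms
proof (induction I rule: finite_induct)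
  case empty then show ?case by (simp add: has_field_derivative_iff)
next
  case (insert i I)
  have "(f has_field_derivative f') (at x within U i)"
  proof (cases "x \<in> U i")
    case True then show ?thesis using insert by auto
  next
    case False
    then have "\<not> x islimpt U i" using insert closed_limpt by auto
    then have "at x within U i = bot" using trivial_limit_within trivial_limit_def by metis
    then show ?thesis by (simp add: has_field_derivative_iff)
  qed
  moreover have "(f has_field_derivative f') (at x within \<Union>(U ` I))" using insert by auto
  ultimately show ?case unfolding has_field_derivative_iff by (simp add: Lim_within_Un)
qed

lemma pderiv_dvd_lemma:
  fixes p :: "real poly"
  shows "(\<forall>r<k. poly ((pderiv ^^ r) p) c = 0) \<Longrightarrow> [:-c, 1:] ^ k dvd p"
proof (induction k arbitrary: p)
  case 0 then show ?case by simp
next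
  case (Suc k)
  have p0: "poly p c = 0" using Suc.prems by force
  have "\<forall>r<k. poly ((pderiv ^^ r) (pderiv p)) c = 0"
  proof (intro allI impI)
    fix r assume "r < k"
    have "(pderiv ^^ r) (pderiv p) = (pderiv ^^ Suc r) p" by (simp only: funpow_Suc_right o_apply)
    moreover have "Suc r < Suc k" using \<open>r < k\<close> by simp
    then have "poly ((pderiv ^^ Suc r) p) c = 0" using Suc.prems by blast
    ultimately show "poly ((pderiv ^^ r) (pderiv p)) c = 0" by (simp only:)
  qed
  then have d: "[:-c, 1:] ^ k dvd pderiv p" using Suc.IH by blast
  show ?case
  proof (cases "p = 0")
    case True then show ?thesis by simp
  next
    case False
    have ord: "order c p = Suc (order c (pderiv p))" using order_pderiv[OF False p0] .
    show ?thesis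
    proof (cases "pderiv p = 0")
      case True
      then obtain h where "p = [:h:]" using pderiv_iszero by blast
      then show ?thesis using p0 False by simp
    next
      case False
      then have "k \<le> order c (pderiv p)" using d order_divides by blast
      then have "Suc k \<le> order c p" using ord by simp
      then show ?thesis using order_divides by blast
    qed
  qed
qed

context knots begin

lemma inpiece_unique: "inpiece j x \<Longrightarrow> inpiece j' x \<Longrightarrow> j = j'"
proof (rule ccontr)
  assume h: "inpiece j x" "inpiece j' x" "j \<noteq> j'"
  have *: False if "inpiece u x" "inpiece v x" "u < v" for u v
  proof -
    have "u \<noteq> int g" using that unfolding inpiece_def by auto
    then have "x < lam (u+1)" using that(1) unfolding inpiece_def by auto
    moreover have "lam (u+1) \<le> lam v" using lam_mono that by simp
    moreover have "lam v \<le> x" using that(2) lam_le_b[of v] unfolding inpiece_def by auto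
    ultimately show False by simp
  qed
  from h show False using *[of j j'] *[of j' j] by linarith
qed

lemma inpiece_ex: "x \<in> {a..b} \<Longrightarrow> \<exists>j. inpiece j x"
proof -
  assume x: "x \<in> {a..b}"
  show ?thesis
  proof (cases "x = b")
    case True then show ?thesis by (intro exI[of _ "int g"]) (auto simp: inpiece_def)
  next
    case False
    define S where "S = {j \<in> {0..int g}. lam j \<le> x}"
    have fin: "finite S" unfolding S_def by (rule finite_subset[of _ "{0..int g}"]) auto
    have ne: "0 \<in> S" using x lam_le0[of 0] by (auto simp: S_def)
    define j where "j = Max S"
    have jS: "j \<in> S" using fin ne Max_in unfolding j_def by blast
    have "x < lam (j+1)"
    proof (cases "j + 1 \<le> int g")
      case True
      then have "j + 1 \<notin> S" using Max_ge[OF fin, of "j+1"] unfolding j_def by force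
      then show ?thesis using True jS by (auto simp: S_def)
    next
      case False
      then have "j = int g" using jS by (auto simp: S_def)
      then show ?thesis using lam_geg[of "int g + 1"] x False \<open>x \<noteq> b\<close> by auto
    qed
    then show ?thesis using jS by (auto simp: S_def inpiece_def)
  qed
qed

definition pc :: "real \<Rightarrow> int" where "pc x = (THE j. inpiece j x)"

lemma pc: "x \<in> {a..b} \<Longrightarrow> inpiece (pc x) x"
  unfolding pc_def using inpiece_ex inpiece_unique by (metis theI)

lemma pc_eq: "inpiece j x \<Longrightarrow> pc x = j"
  unfolding pc_def using inpiece_unique by blast

lemma inpiece_closed: "inpiece j x \<Longrightarrow> lam j \<le> x \<and> x \<le> lam (j+1) \<and> 0 \<le> j \<and> j \<le> int g"
  unfolding inpiece_def using lam_le_b[of j] lam_geg[of "int g + 1"] by auto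

lemma inpiece_other:
  assumes "inpiece j' x" "0 \<le> j" "j \<le> int g" "lam j \<le> x" "x \<le> lam (j+1)"
  shows "j' = j \<or> (j' = j+1 \<and> x = lam (j+1))"
proof -
  have c: "lam j' \<le> x" "0 \<le> j'" "j' \<le> int g" using inpiece_closed[OF assms(1)] by auto
  consider "j' < j" | "j' = j" | "j' = j + 1" | "j + 2 \<le> j'" by linarith
  then show ?thesis
  proof cases
    case 1
    then have "x < lam (j'+1)" using assms(1) assms(3) unfolding inpiece_def by auto
    moreover have "lam (j'+1) \<le> lam j" using 1 lam_mono by simp
    ultimately show ?thesis using assms by simp
  next
    case 4
    have "lam (j+1) < lam (j+2)" using lam_strict[of "j+1"] 4 c assms by (simp add: add.assoc)
    moreover have "lam (j+2) \<le> lam j'" using 4 lam_mono by simp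
    ultimately show ?thesis using c assms by simp
  qed (use c assms in auto)
qed

lemma ab_union: "{a..b} = (\<Union>j\<in>{0..int g}. {lam j..lam (j+1)})"
proof
  show "{a..b} \<subseteq> (\<Union>j\<in>{0..int g}. {lam j..lam (j+1)})"
  proof
    fix x assume x: "x \<in> {a..b}"
    show "x \<in> (\<Union>j\<in>{0..int g}. {lam j..lam (j+1)})" using inpiece_closed[OF pc[OF x]] by auto
  qed
next
  show "(\<Union>j\<in>{0..int g}. {lam j..lam (j+1)}) \<subseteq> {a..b}"
  proof
    fix x assume "x \<in> (\<Union>j\<in>{0..int g}. {lam j..lam (j+1)})"
    then obtain j where "lam j \<le> x" "x \<le> lam (j+1)" by auto
    then show "x \<in> {a..b}" using lam_ge_a[of j] lam_le_b[of "j+1"] by simp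
  qed
qed

lemma glue_piece:
  assumes match0: "\<forall>j. 1 \<le> j \<and> j \<le> int g \<longrightarrow> poly (Q (j-1)) (lam j) = poly (Q j) (lam j)"
    and j: "0 \<le> j" "j \<le> int g" "x \<in> {lam j..lam (j+1)}"
  shows "poly (Q (pc x)) x = poly (Q j) x"
proof -
  have "x \<in> {a..b}" using j lam_ge_a[of j] lam_le_b[of "j+1"] by auto
  from inpiece_other[OF pc[OF this] j(1,2)] j(3) have "pc x = j \<or> (pc x = j+1 \<and> x = lam (j+1))" by auto
  moreover have "pc x \<le> int g" using inpiece_closed[OF pc[OF \<open>x \<in> {a..b}\<close>]] by auto
  ultimately show ?thesis using match0[rule_format, of "j+1"] j by auto
qed

lemma glue_Cn:
  assumes f: "\<forall>x\<in>{a..b}. f x = poly (P (pc x)) x"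
    and match: "\<forall>r\<le>n. \<forall>j. 1 \<le> j \<and> j \<le> int g \<longrightarrow>
        poly ((pderiv ^^ r) (P (j-1))) (lam j) = poly ((pderiv ^^ r) (P j)) (lam j)"
  shows "Cn_on n {a..b} f"
proof -
  define D where "D r x = poly ((pderiv ^^ r) (P (pc x))) x" for r x
  have Dp: "D r x = poly ((pderiv ^^ r) (P j)) x" if "r \<le> n" "0 \<le> j" "j \<le> int g" "x \<in> {lam j..lam (j+1)}" for r j x
    unfolding D_def using glue_piece[of "\<lambda>j. (pderiv ^^ r) (P j)" j x] match that by auto
  have cont: "continuous_on {a..b} (D r)" if "r \<le> n" for r
    unfolding ab_union
    by (rule continuous_on_closed_Union) (auto intro!: continuous_on_eq[OF continuous_on_poly[OF continuous_on_id]] Dp[OF that, symmetric])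
  have der: "(D r has_real_derivative D (Suc r) x) (at x within {a..b})" if "r < n" "x \<in> {a..b}" for r x
    unfolding ab_union
  proof (rule deriv_Union_closed; clarify?)
    fix j assume j: "j \<in> {0..int g}" "x \<in> {lam j..lam (j+1)}"
    have "((\<lambda>y. poly ((pderiv ^^ r) (P j)) y) has_real_derivative poly ((pderiv ^^ Suc r) (P j)) x) (at x within {lam j..lam (j+1)})"
      by (rule has_field_derivative_at_within) (simp add: poly_DERIV)
    then have "((\<lambda>y. poly ((pderiv ^^ r) (P j)) y) has_real_derivative D (Suc r) x) (at x within {lam j..lam (j+1)})"
      using Dp[of "Suc r" j x] that j by simp
    then show "(D r has_real_derivative D (Suc r) x) (at x within {lam j..lam (j+1)})"
      by (rule has_field_derivative_transform_within[where d=1]) (use j that Dp in auto)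
  qed auto
  show ?thesis unfolding Cn_on_def
    by (rule exI[of _ D]) (use f cont der in \<open>auto simp: D_def\<close>)
qed

lemma Cn_match:
  assumes cn: "Cn_on n {a..b} s"
    and sp: "\<forall>j. 0 \<le> j \<and> j \<le> int g \<longrightarrow> (\<forall>x\<in>{lam j..lam (j+1)}. s x = poly (p j) x)"
    and r: "r \<le> n" and j: "1 \<le> j" "j \<le> int g"
  shows "poly ((pderiv ^^ r) (p (j-1))) (lam j) = poly ((pderiv ^^ r) (p j)) (lam j)"
proof -
  obtain D where D0: "\<forall>x\<in>{a..b}. D 0 x = s x" and Dc: "\<forall>j\<le>n. continuous_on {a..b} (D j)"
    and Dd: "\<forall>j<n. \<forall>x\<in>{a..b}. (D j has_real_derivative D (Suc j) x) (at x within {a..b})"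
    using cn unfolding Cn_on_def by blast
  have claim: "\<forall>j. 0 \<le> j \<and> j \<le> int g \<longrightarrow> (\<forall>x\<in>{lam j..lam (j+1)}. D r x = poly ((pderiv ^^ r) (p j)) x)"
    if "r \<le> n" for r
    using that
  proof (induction r)
    case 0
    show ?case
    proof (intro allI impI ballI)
      fix j x assume "0 \<le> j \<and> j \<le> int g" "x \<in> {lam j..lam (j+1)}"
      moreover have "x \<in> {a..b}" using calculation lam_ge_a[of j] lam_le_b[of "j+1"] by simp
      ultimately show "D 0 x = poly ((pderiv ^^ 0) (p j)) x" using D0 sp by simp
    qed
  next
    case (Suc r)
    show ?case
    proof (intro allI impI ballI)
      fix j x assume j: "0 \<le> j \<and> j \<le> int g" and x: "x \<in> {lam j..lam (j+1)}"
      have ljl: "lam j < lam (j+1)" using lam_strict j by auto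
      have sub: "{lam j..lam (j+1)} \<subseteq> {a..b}" using lam_ge_a[of j] lam_le_b[of "j+1"] by auto
      have inner: "D (Suc r) y = poly ((pderiv ^^ Suc r) (p j)) y" if y: "y \<in> {lam j<..<lam (j+1)}" for y
      proof -
        have yab: "a < y" "y < b" using y lam_ge_a[of j] lam_le_b[of "j+1"] by auto
        have "(D r has_real_derivative D (Suc r) y) (at y)"
          using Dd[rule_format, of r y] Suc.prems yab at_within_Icc_at[of a y b] by auto
        moreover have "(D r has_real_derivative poly ((pderiv ^^ Suc r) (p j)) y) (at y)"
        proof (rule has_field_derivative_transform_within_open[where S="{lam j<..<lam (j+1)}"])
          show "((\<lambda>y. poly ((pderiv ^^ r) (p j)) y) has_real_derivative poly ((pderiv ^^ Suc r) (p j)) y) (at y)"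
            by (simp add: poly_DERIV)
          show "poly ((pderiv ^^ r) (p j)) z = D r z" if "z \<in> {lam j<..<lam (j+1)}" for z
            using Suc.IH Suc.prems j that by auto
        qed (use y in auto)
        ultimately show ?thesis using DERIV_unique by blast
      qed
      have cD: "continuous_on (closure {lam j<..<lam (j+1)}) (\<lambda>y. D (Suc r) y - poly ((pderiv ^^ Suc r) (p j)) y)"
        using ljl continuous_on_subset[OF Dc[rule_format, OF Suc.prems] sub]
        by (auto intro!: continuous_intros)
      have xc: "x \<in> closure {lam j<..<lam (j+1)}" using ljl x by simp
      have "D (Suc r) x - poly ((pderiv ^^ Suc r) (p j)) x \<le> 0"
        by (rule continuous_le_on_closure[OF cD xc]) (use inner in auto)
      moreover have "D (Suc r) x - poly ((pderiv ^^ Suc r) (p j)) x \<ge> 0"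
        by (rule continuous_ge_on_closure[OF cD xc]) (use inner in auto)
      ultimately show "D (Suc r) x = poly ((pderiv ^^ Suc r) (p j)) x" by simp
    qed
  qed
  have "D r (lam j) = poly ((pderiv ^^ r) (p (j-1))) (lam j)"
    using claim[OF r, rule_format, of "j-1" "lam j"] j lam_mono[of "j-1" j] by auto
  moreover have "D r (lam j) = poly ((pderiv ^^ r) (p j)) (lam j)"
    using claim[OF r, rule_format, of j "lam j"] j lam_mono[of j "j+1"] by auto
  ultimately show ?thesis by simp
qed

end


lemma sum_parts:
  fixes G :: "int \<Rightarrow> real poly" and c :: "int \<Rightarrow> real"
  shows "(\<Sum>i\<in>{lo..lo + int n - 1}. smult (c i) (G i - G (i+1)))
    = (\<Sum>i\<in>{lo..lo + int n}. smult (c i - c (i-1)) (G i)) + smult (c (lo-1)) (G lo) - smult (c (lo + int n)) (G (lo + int n))"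
proof (induction n)
  case 0 then show ?case by (simp add: smult_diff_left)
next
  case (Suc n)
  have s1: "{lo..lo + int (Suc n) - 1} = insert (lo + int n) {lo..lo + int n - 1}" by auto
  have s2: "{lo..lo + int (Suc n)} = insert (lo + int n + 1) {lo..lo + int n}" by auto
  have "lo + int n \<notin> {lo..lo + int n - 1}" "lo + int n + 1 \<notin> {lo..lo + int n}" by auto
  then show ?case unfolding s1 s2 using Suc.IH
    by (simp add: smult_diff_left smult_diff_right algebra_simps)
qed

lemma poly_zero_on_interval:
  fixes p :: "real poly"
  assumes "u < v" "\<forall>x\<in>{u<..<v}. poly p x = 0"
  shows "p = 0"
proof (rule ccontr)
  assume "p \<noteq> 0"
  then have "finite {x. poly p x = 0}" using poly_roots_finite by blast
  moreover have "{u<..<v} \<subseteq> {x. poly p x = 0}" using assms by auto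
  ultimately have "finite {u<..<v}" using finite_subset by blast
  then show False using assms(1) infinite_Ioo by blast
qed

lemma smult_sum_r: "smult c (sum f A) = (\<Sum>x\<in>A. smult c (f x))"
  by (induction A rule: infinite_finite_induct) (simp_all add: smult_add_right)

lemma pderiv_sum': "pderiv (sum f A) = (\<Sum>x\<in>A. pderiv (f x))"
  by (induction A rule: infinite_finite_induct) (simp_all add: pderiv_add)

context knots begin

lemma bspline_pc: "x \<in> {a..b} \<Longrightarrow> bspline b lam m i x = poly (bp lam m i (pc x)) x"
  using bspline_poly pc by blast

lemma pc_a: "pc a = 0"
  by (rule pc_eq) (use lam_strict[of 0] lam_le0[of 0] in \<open>auto simp: inpiece_def\<close>)

lemma pc_b: "pc b = int g"
  by (rule pc_eq) (auto simp: inpiece_def)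

lemma glue_der:
  assumes m0: "\<forall>j. 1 \<le> j \<and> j \<le> int g \<longrightarrow> poly (Q (j-1)) (lam j) = poly (Q j) (lam j)"
    and m1: "\<forall>j. 1 \<le> j \<and> j \<le> int g \<longrightarrow> poly (pderiv (Q (j-1))) (lam j) = poly (pderiv (Q j)) (lam j)"
    and x: "x \<in> {a..b}"
  shows "((\<lambda>y. poly (Q (pc y)) y) has_real_derivative poly (pderiv (Q (pc x))) x) (at x within {a..b})"
  unfolding ab_union
proof (rule deriv_Union_closed; clarify?)
  fix j assume j: "j \<in> {0..int g}" "x \<in> {lam j..lam (j+1)}"
  have "((\<lambda>y. poly (Q j) y) has_real_derivative poly (pderiv (Q j)) x) (at x within {lam j..lam (j+1)})"
    by (rule has_field_derivative_at_within) (simp add: poly_DERIV)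
  then have "((\<lambda>y. poly (Q j) y) has_real_derivative poly (pderiv (Q (pc x))) x) (at x within {lam j..lam (j+1)})"
    using glue_piece[of "\<lambda>j. pderiv (Q j)" j x, OF m1] j by simp
  then show "((\<lambda>y. poly (Q (pc y)) y) has_real_derivative poly (pderiv (Q (pc x))) x) (at x within {lam j..lam (j+1)})"
    by (rule has_field_derivative_transform_within[where d=1]) (use j glue_piece[OF m0] in auto)
qed auto

lemma bp_indep:
  assumes "1 \<le> m"
    and "\<forall>j. 0 \<le> j \<and> j \<le> int g \<longrightarrow> (\<Sum>i\<in>{1 - int m..int g}. smult (c i) (bp lam m i j)) = 0"
  shows "\<forall>i\<in>{1 - int m..int g}. c i = 0"
  using assms
proof (induction m arbitrary: c)
  case 0 then show ?case by simp
next
  case (Suc m)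
  show ?case
  proof (cases "m = 0")
    case True
    show ?thesis
    proof
      fix i assume i: "i \<in> {1 - int (Suc m)..int g}"
      have "(\<Sum>l\<in>{0..int g}. smult (c l) (if l = i then 1 else 0)) = [:c i:]"
        using i True by (simp add: sum.delta' if_distrib cong: if_cong)
      moreover have "(\<Sum>l\<in>{0..int g}. smult (c l) (if l = i then 1 else 0)) = 0"
        using Suc.prems(2)[rule_format, of i] i True by simp
      ultimately show "c i = 0" by simp
    qed
  next
    case False
    define f where "f i = 1 / (lam (i + int m) - lam i)" for i
    define e where "e i = (c i - c (i-1)) * f i" for i
    have fpos: "f i \<noteq> 0" if "i \<in> {1 - int m..int g}" for i
      using lam_less[of i "i + int m"] that False by (simp add: f_def)
    have step: "(\<Sum>i\<in>{1 - int m..int g}. smult (e i) (bp lam m i j)) = 0" if j: "0 \<le> j" "j \<le> int g" for j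
    proof -
      define G where "G i = smult (f i) (bp lam m i j)" for i
      have G0: "G (- int m) = 0" "G (int g + 1) = 0" using j bp_support by (auto simp: G_def)
      have "pderiv (\<Sum>i\<in>{1 - int (Suc m)..int g}. smult (c i) (bp lam (Suc m) i j)) = 0"
        using Suc.prems(2) j by simp
      then have "(\<Sum>i\<in>{1 - int (Suc m)..int g}. smult (c i) (smult (real m) (G i - G (i+1)))) = 0"
        by (simp add: pderiv_sum' pderiv_smult bp_deriv G_def f_def)
      then have "smult (real m) (\<Sum>i\<in>{- int m..- int m + int (nat (int g + int m + 1)) - 1}. smult (c i) (G i - G (i+1))) = 0"
        by (simp add: smult_sum_r smult_smult mult.commute)
      then have "(\<Sum>i\<in>{- int m..- int m + int (nat (int g + int m + 1)) - 1}. smult (c i) (G i - G (i+1))) = 0"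
        using False by simp
      then have "(\<Sum>i\<in>{- int m..int g + 1}. smult (c i - c (i-1)) (G i)) = 0"
        unfolding sum_parts using G0 by simp
      moreover have "(\<Sum>i\<in>{- int m..int g + 1}. smult (c i - c (i-1)) (G i)) = (\<Sum>i\<in>{1 - int m..int g}. smult (c i - c (i-1)) (G i))"
      proof (rule sum.mono_neutral_right)
        show "\<forall>i\<in>{- int m..int g + 1} - {1 - int m..int g}. smult (c i - c (i-1)) (G i) = 0"
        proof
          fix i assume "i \<in> {- int m..int g + 1} - {1 - int m..int g}"
          then have "i = - int m \<or> i = int g + 1" by auto
          then show "smult (c i - c (i-1)) (G i) = 0" using G0 by auto
        qed
      qed auto
      ultimately show ?thesis by (simp add: G_def e_def smult_smult)
    qed
    have e0: "\<forall>i\<in>{1 - int m..int g}. e i = 0"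
      using Suc.IH[of e] step False by simp
    have ceq: "c i = c (i-1)" if "i \<in> {1 - int m..int g}" for i
      using e0[rule_format, OF that] fpos[OF that] by (simp add: e_def)
    have call: "c (- int m + int n) = c (- int m)" if "- int m + int n \<le> int g" for n
      using that
    proof (induction n)
      case 0 then show ?case by simp
    next
      case (Suc n)
      have "- int m + int (Suc n) \<in> {1 - int m..int g}" using Suc.prems by simp
      from ceq[OF this] have "c (- int m + int (Suc n)) = c (- int m + int n)" by (simp add: algebra_simps)
      then show ?case using Suc by linarith
    qed
    have cc: "c i = c (- int m)" if "i \<in> {- int m..int g}" for i
      using call[of "nat (i + int m)"] that by simp
    have "poly (\<Sum>i\<in>{1 - int (Suc m)..int g}. smult (c i) (bp lam (Suc m) i 0)) a = 0"
      using Suc.prems(2) by simp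
    then have "(\<Sum>i\<in>{- int m..int g}. c i * (if i = - int m then 1 else 0)) = 0"
      by (simp add: poly_sum bp_at_a)
    then have "c (- int m) = 0" using False by (simp add: if_distrib sum.delta cong: if_cong)
    show ?thesis
    proof
      fix i assume "i \<in> {1 - int (Suc m)..int g}"
      then have "i \<in> {- int m..int g}" by simp
      then have "c i = c (- int m)" by (rule cc)
      then show "c i = 0" using \<open>c (- int m) = 0\<close> by simp
    qed
  qed
qed

end


locale knotsk = knots +
  fixes k :: nat
  assumes k1: "1 \<le> k"
begin

definition Zp :: "int \<Rightarrow> int \<Rightarrow> real poly" where
  "Zp i j = pderiv (bp lam (Suc (Suc k)) i j)"

lemma Zp_eq: "Zp i j = smult (real (Suc k)) (smult (1/(lam (i + int k + 1) - lam i)) (bp lam (Suc k) i j)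
   - smult (1/(lam (i + int k + 2) - lam (i+1))) (bp lam (Suc k) (i+1) j))"
proof -
  have e1: "i + int (Suc k) = i + int k + 1" and e2: "i + 1 + int (Suc k) = i + int k + 2" by simp_all
  show ?thesis unfolding Zp_def bp_deriv e1 e2 ..
qed

lemma Zfun_poly: "x \<in> {a..b} \<Longrightarrow> Zfun b lam k i x = poly (Zp i (pc x)) x"
  unfolding Zp_eq Zfun_def using bspline_pc[of x "Suc k" i] bspline_pc[of x "Suc k" "i+1"]
  by (simp add: algebra_simps)

lemma Zp_match:
  assumes "r \<le> k - 1" "1 \<le> j" "j \<le> int g"
  shows "poly ((pderiv ^^ r) (Zp i (j-1))) (lam j) = poly ((pderiv ^^ r) (Zp i j)) (lam j)"
proof -
  have "Suc r + 2 \<le> Suc (Suc k)" using assms k1 by simp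
  from bp_smooth[OF this assms(2,3), of i] show ?thesis
    unfolding Zp_def by (simp only: funpow_Suc_right o_apply)
qed

lemma Zfun_spline: "Zfun b lam k i \<in> spline_space k g lam a b"
  unfolding spline_space_def
proof (intro CollectI conjI allI impI)
  fix j :: int assume j: "0 \<le> j \<and> j \<le> int g"
  have "degree (Zp i j) \<le> k"
    unfolding Zp_def degree_pderiv using bp_degree[of "Suc (Suc k)" i j] by simp
  moreover have "\<forall>x\<in>{lam j..lam (j+1)}. Zfun b lam k i x = poly (Zp i j) x"
  proof
    fix x assume x: "x \<in> {lam j..lam (j+1)}"
    then have xab: "x \<in> {a..b}" using lam_ge_a[of j] lam_le_b[of "j+1"] by auto
    have "poly (Zp i (pc x)) x = poly (Zp i j) x"
      by (rule glue_piece) (use Zp_match[of 0] j x in auto)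
    then show "Zfun b lam k i x = poly (Zp i j) x" using Zfun_poly[OF xab] by simp
  qed
  ultimately show "\<exists>p. degree p \<le> k \<and> (\<forall>x\<in>{lam j..lam (j+1)}. Zfun b lam k i x = poly p x)" by blast
next
  show "Cn_on (k - 1) {a..b} (Zfun b lam k i)"
    by (rule glue_Cn[where P="Zp i"]) (use Zfun_poly Zp_match in auto)
qed

lemma Zfun_integral:
  assumes i: "- int k \<le> i" "i \<le> int g - 1"
  shows "(Zfun b lam k i has_integral 0) {a..b}"
proof -
  define F where "F = bspline b lam (Suc (Suc k)) i"
  have der: "(F has_real_derivative Zfun b lam k i x) (at x within {a..b})" if x: "x \<in> {a..b}" for x
  proof -
    have m0: "\<forall>j. 1 \<le> j \<and> j \<le> int g \<longrightarrow> poly (bp lam (Suc (Suc k)) i (j-1)) (lam j) = poly (bp lam (Suc (Suc k)) i j) (lam j)"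
      by (intro allI impI bp_cont) auto
    have m1: "\<forall>j. 1 \<le> j \<and> j \<le> int g \<longrightarrow> poly (pderiv (bp lam (Suc (Suc k)) i (j-1))) (lam j) = poly (pderiv (bp lam (Suc (Suc k)) i j)) (lam j)"
      using bp_smooth[of 1 "Suc (Suc k)"] k1 by simp
    have "((\<lambda>y. poly (bp lam (Suc (Suc k)) i (pc y)) y) has_real_derivative Zfun b lam k i x) (at x within {a..b})"
      using glue_der[OF m0 m1 x] Zfun_poly[OF x] by (simp add: Zp_def)
    then show ?thesis
      by (rule has_field_derivative_transform_within[where d=1]) (use x bspline_pc in \<open>auto simp: F_def simp del: bp.simps bspline.simps\<close>)
  qed
  have "(Zfun b lam k i has_integral (F b - F a)) {a..b}"
    by (rule fundamental_theorem_of_calculus) (use a_less_b der in \<open>auto simp: has_real_derivative_iff_has_vector_derivative\<close>)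
  moreover have "F b = 0"
  proof -
    have "F b = poly (bp lam (Suc (Suc k)) i (int g)) b" unfolding F_def
      using bspline_pc[of b "Suc (Suc k)" i] pc_b a_less_b by (simp del: bp.simps bspline.simps)
    also have "\<dots> = 0" using bp_at_b[of "Suc (Suc k)" i] i by (simp del: bp.simps)
    finally show ?thesis .
  qed
  moreover have "F a = 0"
  proof -
    have "F a = poly (bp lam (Suc (Suc k)) i 0) a" unfolding F_def
      using bspline_pc[of a "Suc (Suc k)" i] pc_a a_less_b by (simp del: bp.simps bspline.simps)
    also have "\<dots> = 0" using bp_at_a[of "Suc (Suc k)" i] i by (simp del: bp.simps)
    finally show ?thesis .
  qed
  ultimately show ?thesis by simp
qed

lemma Zfun_zero_int: "- int k \<le> i \<Longrightarrow> i \<le> int g - 1 \<Longrightarrow> Zfun b lam k i \<in> zero_int_spline_space k g lam a b"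
  unfolding zero_int_spline_space_def using Zfun_spline Zfun_integral integral_unique by blast

lemma Zfun_indep:
  assumes h: "\<forall>x\<in>{a..b}. (\<Sum>i\<in>{- int k..int g - 1}. c i * Zfun b lam k i x) = 0"
  shows "\<forall>i\<in>{- int k..int g - 1}. c i = 0"
proof -
  define c' where "c' i = (if i \<in> {- int k..int g - 1} then c i else 0)" for i
  define f where "f i = 1 / (lam (i + int (Suc k)) - lam i)" for i
  define e where "e i = (c' i - c' (i-1)) * f i" for i
  have fpos: "f i \<noteq> 0" if "i \<in> {- int k..int g}" for i
    using lam_less[of i "i + int (Suc k)"] that by (simp add: f_def)
  have step: "(\<Sum>i\<in>{1 - int (Suc k)..int g}. smult (e i) (bp lam (Suc k) i j)) = 0" if j: "0 \<le> j" "j \<le> int g" for j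
  proof -
    define G where "G i = smult (f i) (bp lam (Suc k) i j)" for i
    have S0: "(\<Sum>i\<in>{- int k..int g - 1}. smult (c i) (Zp i j)) = 0"
    proof (rule poly_zero_on_interval[of "lam j" "lam (j+1)"])
      show "lam j < lam (j+1)" using lam_strict j by simp
      show "\<forall>x\<in>{lam j<..<lam (j + 1)}. poly (\<Sum>i\<in>{- int k..int g - 1}. smult (c i) (Zp i j)) x = 0"
      proof
        fix x assume x: "x \<in> {lam j<..<lam (j + 1)}"
        have ip: "inpiece j x" using x j by (auto simp: inpiece_def)
        have xab: "x \<in> {a..b}" using inpiece_closed[OF ip] lam_ge_a[of j] lam_le_b[of "j+1"] by auto
        show "poly (\<Sum>i\<in>{- int k..int g - 1}. smult (c i) (Zp i j)) x = 0"
          using h[rule_format, OF xab] Zfun_poly[OF xab] pc_eq[OF ip] by (simp add: poly_sum)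
      qed
    qed
    have "Zp i j = smult (real (Suc k)) (G i - G (i+1))" for i
      unfolding Zp_def bp_deriv G_def f_def by (simp add: algebra_simps)
    then have "(\<Sum>i\<in>{- int k..int g - 1}. smult (c' i) (smult (real (Suc k)) (G i - G (i+1)))) = 0"
      using S0 by (simp add: c'_def)
    then have "smult (real (Suc k)) (\<Sum>i\<in>{- int k..- int k + int (nat (int g + int k)) - 1}. smult (c' i) (G i - G (i+1))) = 0"
      by (simp add: smult_sum_r smult_smult mult.commute)
    then have "(\<Sum>i\<in>{- int k..- int k + int (nat (int g + int k)) - 1}. smult (c' i) (G i - G (i+1))) = 0"
      by simp
    then have "(\<Sum>i\<in>{- int k..int g}. smult (c' i - c' (i-1)) (G i)) = 0"
      unfolding sum_parts by (simp add: c'_def)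
    then show ?thesis by (simp add: G_def e_def smult_smult)
  qed
  have e0: "\<forall>i\<in>{1 - int (Suc k)..int g}. e i = 0"
    by (rule bp_indep) (use step in auto)
  have ceq: "c' i = c' (i-1)" if "i \<in> {- int k..int g}" for i
    using e0[rule_format, of i] that fpos[OF that] by (simp add: e_def)
  have call: "c' (- int k - 1 + int n) = 0" if "- int k - 1 + int n \<le> int g" for n
    using that
  proof (induction n)
    case 0 then show ?case by (simp add: c'_def)
  next
    case (Suc n)
    have "- int k - 1 + int (Suc n) \<in> {- int k..int g}" using Suc.prems by simp
    from ceq[OF this] have "c' (- int k - 1 + int (Suc n)) = c' (- int k - 1 + int n)" by (simp add: algebra_simps)
    then show ?case using Suc by linarith
  qed
  show ?thesis
  proof
    fix i assume i: "i \<in> {- int k..int g - 1}"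
    have "c' i = 0" using call[of "nat (i + int k + 1)"] i by simp
    then show "c i = 0" using i by (simp add: c'_def)
  qed
qed

end


interpretation fv: vector_space "\<lambda>(c::real) (f::real \<Rightarrow> real) x. c * f x"
  by unfold_locales (auto simp: fun_eq_iff algebra_simps)

lemma sum_fun_apply: "(sum f A) x = (\<Sum>a\<in>A. f a (x::real) :: real)"
  by (induction A rule: infinite_finite_induct) auto

lemma telescope_int: "(\<Sum>j\<in>{1..int n}. F j - F (j-1)) = F (int n) - (F 0 :: real)"
proof (induction n)
  case 0 then show ?case by simp
next
  case (Suc n)
  have "{1..int (Suc n)} = insert (int n + 1) {1..int n}" by auto
  then show ?case using Suc by (simp add: add.commute)
qed

lemma poly_sum_k:
  fixes p :: "real poly"
  assumes "degree p \<le> k" shows "poly p x = (\<Sum>i\<le>k. coeff p i * x ^ i)"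
proof -
  have "poly p x = (\<Sum>i\<le>degree p. coeff p i * x ^ i)" by (rule poly_altdef)
  also have "\<dots> = (\<Sum>i\<le>k. coeff p i * x ^ i)"
    by (rule sum.mono_neutral_left) (use assms in \<open>auto simp: coeff_eq_0\<close>)
  finally show ?thesis .
qed

context knotsk begin

definition tp :: "int \<Rightarrow> real \<Rightarrow> real" where
  "tp j x = (if lam j \<le> x then (x - lam j) ^ k else 0)"

lemma spline_repr:
  assumes s: "s \<in> spline_space k g lam a b"
  shows "\<exists>\<alpha> \<beta>. \<forall>x\<in>{a..b}. s x = (\<Sum>l\<le>k. \<alpha> l * x ^ l) + (\<Sum>j\<in>{1..int g}. \<beta> j * tp j x)"
proof -
  have "\<forall>i. \<exists>p. 0 \<le> i \<and> i \<le> int g \<longrightarrow> degree p \<le> k \<and> (\<forall>x\<in>{lam i..lam (i+1)}. s x = poly p x)"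
    using s unfolding spline_space_def by blast
  then obtain p where p: "\<forall>i. 0 \<le> i \<and> i \<le> int g \<longrightarrow> degree (p i) \<le> k \<and> (\<forall>x\<in>{lam i..lam (i+1)}. s x = poly (p i) x)"
    using choice[of "\<lambda>i p. 0 \<le> i \<and> i \<le> int g \<longrightarrow> degree p \<le> k \<and> (\<forall>x\<in>{lam i..lam (i+1)}. s x = poly p x)"] by blast
  have cn: "Cn_on (k - 1) {a..b} s" using s unfolding spline_space_def by blast
  have "\<forall>j. \<exists>\<beta>. 1 \<le> j \<and> j \<le> int g \<longrightarrow> p j - p (j-1) = smult \<beta> ([:- lam j, 1:] ^ k)"
  proof (intro allI)
    fix j
    show "\<exists>\<beta>. 1 \<le> j \<and> j \<le> int g \<longrightarrow> p j - p (j-1) = smult \<beta> ([:- lam j, 1:] ^ k)"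
    proof (cases "1 \<le> j \<and> j \<le> int g")
      case False then show ?thesis by blast
    next
      case True
      have "\<forall>r<k. poly ((pderiv ^^ r) (p j - p (j-1))) (lam j) = 0"
        using Cn_match[OF cn, of p] p True by (auto simp: higher_pderiv_diff)
      then have "[:- lam j, 1:] ^ k dvd p j - p (j-1)" by (rule pderiv_dvd_lemma)
      then obtain q where q: "p j - p (j-1) = [:- lam j, 1:] ^ k * q" by (auto elim: dvdE)
      have dd: "degree (p j - p (j-1)) \<le> k"
        using p True degree_diff_le[of "p j" k "p (j-1)"] by auto
      have "degree q = 0"
      proof (cases "q = 0")
        case False
        then have "degree (p j - p (j-1)) = k + degree q" unfolding q
          by (subst degree_mult_eq) (auto simp: degree_power_eq)
        then show ?thesis using dd by simp
      qed simp
      then obtain \<beta> where "q = [:\<beta>:]" by (auto elim: degree_eq_zeroE)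
      then have "p j - p (j-1) = smult \<beta> ([:- lam j, 1:] ^ k)" using q by simp
      then show ?thesis by blast
    qed
  qed
  then obtain \<beta> where \<beta>: "\<forall>j. 1 \<le> j \<and> j \<le> int g \<longrightarrow> p j - p (j-1) = smult (\<beta> j) ([:- lam j, 1:] ^ k)"
    using choice[of "\<lambda>j \<beta>. 1 \<le> j \<and> j \<le> int g \<longrightarrow> p j - p (j-1) = smult \<beta> ([:- lam j, 1:] ^ k)"] by blast
  have "\<forall>x\<in>{a..b}. s x = (\<Sum>l\<le>k. coeff (p 0) l * x ^ l) + (\<Sum>j\<in>{1..int g}. \<beta> j * tp j x)"
  proof
    fix x assume x: "x \<in> {a..b}"
    define J where "J = pc x"
    have J: "lam J \<le> x" "x \<le> lam (J+1)" "0 \<le> J" "J \<le> int g" using inpiece_closed[OF pc[OF x]] by (auto simp: J_def)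
    have sx: "s x = poly (p J) x" using p J by auto
    have trm: "\<beta> j * tp j x = (if j \<le> J then poly (p j) x - poly (p (j-1)) x else 0)"
      if j: "j \<in> {1..int g}" for j
    proof (cases "j \<le> J")
      case True
      then have "lam j \<le> x" using lam_mono[of j J] J by simp
      then show ?thesis using True \<beta>[rule_format, of j] j
        by (simp add: tp_def poly_power flip: poly_diff)
    next
      case False
      then have "x \<le> lam j" using lam_mono[of "J+1" j] J by simp
      moreover have "k \<noteq> 0" using k1 by simp
      ultimately show ?thesis using False by (auto simp: tp_def)
    qed
    have "(\<Sum>j\<in>{1..int g}. \<beta> j * tp j x) = (\<Sum>j\<in>{1..int g}. (if j \<le> J then poly (p j) x - poly (p (j-1)) x else 0))"
      using trm by simp
    also have "\<dots> = (\<Sum>j\<in>{1..J}. poly (p j) x - poly (p (j-1)) x)"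
      by (rule sum.mono_neutral_cong_right) (use J in auto)
    also have "\<dots> = poly (p J) x - poly (p 0) x"
      using telescope_int[of "\<lambda>j. poly (p j) x" "nat J"] J by simp
    finally show "s x = (\<Sum>l\<le>k. coeff (p 0) l * x ^ l) + (\<Sum>j\<in>{1..int g}. \<beta> j * tp j x)"
      using sx poly_sum_k[of "p 0" k x] p by simp
  qed
  then show ?thesis by blast
qed

end


definition restr :: "real \<Rightarrow> real \<Rightarrow> (real \<Rightarrow> real) \<Rightarrow> real \<Rightarrow> real" where
  "restr a b f = (\<lambda>x. if x \<in> {a..b} then f x else 0)"

context knotsk begin

definition Tset :: "(real \<Rightarrow> real) set" where
  "Tset = (\<lambda>l. restr a b (\<lambda>x. x ^ l)) ` {..k} \<union> (\<lambda>j. restr a b (tp j)) ` {1..int g}"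

lemma Tset_finite: "finite Tset" unfolding Tset_def by simp

lemma Tset_card: "card Tset \<le> k + 1 + g"
proof -
  have "card Tset \<le> card ((\<lambda>l. restr a b (\<lambda>x. x ^ l)) ` {..k}) + card ((\<lambda>j. restr a b (tp j)) ` {1..int g})"
    unfolding Tset_def by (rule card_Un_le)
  also have "\<dots> \<le> card {..k} + card {1..int g}"
    by (intro add_mono card_image_le) auto
  finally show ?thesis by simp
qed

lemma spline_in_span:
  assumes "s \<in> spline_space k g lam a b"
  shows "restr a b s \<in> fv.span Tset"
proof -
  obtain \<alpha> \<beta> where r: "\<forall>x\<in>{a..b}. s x = (\<Sum>l\<le>k. \<alpha> l * x ^ l) + (\<Sum>j\<in>{1..int g}. \<beta> j * tp j x)"
    using spline_repr[OF assms] by blast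
  have "restr a b s = (\<Sum>l\<le>k. (\<lambda>x. \<alpha> l * restr a b (\<lambda>x. x ^ l) x)) + (\<Sum>j\<in>{1..int g}. (\<lambda>x. \<beta> j * restr a b (tp j) x))"
    by (rule ext) (auto simp: restr_def sum_fun_apply r)
  also have "\<dots> \<in> fv.span Tset"
    by (intro fv.span_add fv.span_sum fv.span_scale fv.span_base) (auto simp: Tset_def)
  finally show ?thesis .
qed

lemma span_final:
  assumes s: "s \<in> zero_int_spline_space k g lam a b"
  shows "\<exists>c. \<forall>x\<in>{a..b}. s x = (\<Sum>i\<in>{- int k..int g - 1}. c i * Zfun b lam k i x)"
proof -
  define I where "I = {- int k..int g - 1}"
  define Z where "Z i = restr a b (Zfun b lam k i)" for i
  define Zs where "Zs = Z ` I"
  define W where "W = {f :: real \<Rightarrow> real. (f has_integral 0) {a..b}}"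
  have inj: "inj_on Z I"
  proof
    fix i i' assume ii: "i \<in> I" "i' \<in> I" "Z i = Z i'"
    show "i = i'"
    proof (rule ccontr)
      assume ne: "i \<noteq> i'"
      define c where "c l = (if l = i then 1 else if l = i' then -1 else (0::real))" for l
      have "\<forall>x\<in>{a..b}. (\<Sum>l\<in>{- int k..int g - 1}. c l * Zfun b lam k l x) = 0"
      proof
        fix x assume x: "x \<in> {a..b}"
        have "Zfun b lam k i x = Zfun b lam k i' x" using fun_cong[OF ii(3), of x] x by (simp add: Z_def restr_def)
        moreover have "(\<Sum>l\<in>I. c l * Zfun b lam k l x) = (\<Sum>l\<in>I. (if l = i then Zfun b lam k i x else 0) - (if l = i' then Zfun b lam k i' x else 0))"
          by (rule sum.cong) (use ne in \<open>auto simp: c_def\<close>)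
        ultimately show "(\<Sum>l\<in>{- int k..int g - 1}. c l * Zfun b lam k l x) = 0"
          using ii by (simp add: sum_subtractf I_def)
      qed
      then have "c i = 0" using Zfun_indep ii(1) unfolding I_def by blast
      then show False by (simp add: c_def)
    qed
  qed
  have indep: "fv.independent Zs"
  proof (rule fv.independent_if_scalars_zero)
    show "finite Zs" unfolding Zs_def I_def by simp
    fix u v assume h: "(\<Sum>v\<in>Zs. (\<lambda>x. u v * v x)) = 0" and v: "v \<in> Zs"
    have "\<forall>x\<in>{a..b}. (\<Sum>i\<in>{- int k..int g - 1}. u (Z i) * Zfun b lam k i x) = 0"
    proof
      fix x assume x: "x \<in> {a..b}"
      have "0 = (\<Sum>v\<in>Zs. (\<lambda>x. u v * v x)) x" using h by simp
      also have "\<dots> = (\<Sum>i\<in>I. u (Z i) * Z i x)"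
        unfolding Zs_def sum_fun_apply by (subst sum.reindex[OF inj]) simp
      finally show "(\<Sum>i\<in>{- int k..int g - 1}. u (Z i) * Zfun b lam k i x) = 0"
        using x by (simp add: Z_def restr_def I_def)
    qed
    then have "\<forall>i\<in>I. u (Z i) = 0" using Zfun_indep[of "\<lambda>i. u (Z i)"] unfolding I_def by blast
    then show "u v = 0" using v unfolding Zs_def by auto
  qed
  have subW: "fv.subspace W"
    unfolding fv.subspace_def W_def
  proof (intro conjI ballI allI)
    show "0 \<in> {f :: real \<Rightarrow> real. (f has_integral 0) {a..b}}" by (simp add: zero_fun_def)
  next
    fix x y assume "x \<in> {f :: real \<Rightarrow> real. (f has_integral 0) {a..b}}" "y \<in> {f :: real \<Rightarrow> real. (f has_integral 0) {a..b}}"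
    then show "x + y \<in> {f :: real \<Rightarrow> real. (f has_integral 0) {a..b}}"
      using has_integral_add[of x 0 "{a..b}" y 0] by (simp add: plus_fun_def)
  next
    fix c x assume "x \<in> {f :: real \<Rightarrow> real. (f has_integral 0) {a..b}}"
    then show "(\<lambda>xa. c * x xa) \<in> {f :: real \<Rightarrow> real. (f has_integral 0) {a..b}}"
      using has_integral_mult_right[of x 0 "{a..b}" c] by simp
  qed
  have ZsW: "Zs \<subseteq> W"
  proof
    fix f assume "f \<in> Zs"
    then obtain i where i: "i \<in> I" "f = Z i" unfolding Zs_def by blast
    have "(Zfun b lam k i has_integral 0) {a..b}" using Zfun_integral i unfolding I_def by auto
    then show "f \<in> W" unfolding W_def i Z_def restr_def mem_Collect_eq
      by (rule has_integral_eq[rotated]) simp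
  qed
  have sW: "restr a b s \<in> W"
  proof -
    obtain D where D0: "\<forall>x\<in>{a..b}. D 0 x = s x" and Dc: "\<forall>j\<le>k-1. continuous_on {a..b} (D j)"
      using s unfolding zero_int_spline_space_def spline_space_def Cn_on_def by blast
    have "continuous_on {a..b} s" using continuous_on_eq[OF Dc[rule_format, of 0]] D0 by auto
    then have "(s has_integral integral {a..b} s) {a..b}" using integrable_continuous_interval by blast
    then have "(s has_integral 0) {a..b}" using s unfolding zero_int_spline_space_def by simp
    then show ?thesis unfolding W_def restr_def mem_Collect_eq by (rule has_integral_eq[rotated]) simp
  qed
  have oneW: "restr a b (\<lambda>x. 1) \<notin> W"
  proof
    assume "restr a b (\<lambda>x. 1) \<in> W"
    then have "((\<lambda>x. if x \<in> {a..b} then 1 else 0::real) has_integral 0) {a..b}" unfolding W_def restr_def by simp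
    then have "((\<lambda>x. 1::real) has_integral 0) {a..b}"
      by (rule has_integral_eq[rotated]) simp
    moreover have "((\<lambda>x. 1::real) has_integral (b - a)) {a..b}"
      using has_integral_const_real[of "1::real" a b] a_less_b by simp
    ultimately have "(0::real) = b - a" by (rule has_integral_unique)
    then show False using a_less_b by simp
  qed
  have ZsT: "Zs \<subseteq> fv.span Tset"
  proof
    fix f assume "f \<in> Zs"
    then obtain i where "f = Z i" unfolding Zs_def by blast
    then show "f \<in> fv.span Tset" unfolding Z_def using spline_in_span[OF Zfun_spline] by simp
  qed
  have sT: "restr a b s \<in> fv.span Tset"
    using spline_in_span s unfolding zero_int_spline_space_def by blast
  have oneT: "restr a b (\<lambda>x. 1) \<in> fv.span Tset"
  proof -
    have "restr a b (\<lambda>x. x ^ 0) \<in> Tset" unfolding Tset_def by blast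
    then show ?thesis using fv.span_base by simp
  qed
  have inspan: "restr a b s \<in> fv.span Zs"
  proof (rule ccontr)
    assume nin: "restr a b s \<notin> fv.span Zs"
    define A where "A = insert (restr a b (\<lambda>x. 1)) (insert (restr a b s) Zs)"
    have i1: "fv.independent (insert (restr a b s) Zs)" by (rule fv.independent_insertI[OF nin indep])
    have "fv.span (insert (restr a b s) Zs) \<subseteq> W"
      by (rule fv.span_minimal[OF _ subW]) (use ZsW sW in auto)
    then have n1: "restr a b (\<lambda>x. 1) \<notin> fv.span (insert (restr a b s) Zs)" using oneW by blast
    have iA: "fv.independent A" unfolding A_def by (rule fv.independent_insertI[OF n1 i1])
    have "A \<subseteq> fv.span Tset" unfolding A_def using ZsT sT oneT by auto
    then have "card A \<le> card Tset" using fv.independent_span_bound[OF Tset_finite iA] by blast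
    moreover have "card A = card Zs + 2"
    proof -
      have f: "finite Zs" unfolding Zs_def I_def by simp
      have "restr a b s \<notin> Zs" using nin fv.span_base by blast
      moreover have "restr a b (\<lambda>x. 1) \<notin> insert (restr a b s) Zs" using oneW ZsW sW by (metis insert_iff subsetD)
      ultimately show ?thesis unfolding A_def using f by simp
    qed
    moreover have "card Zs = k + g"
    proof -
      have "card Zs = card I" unfolding Zs_def by (rule card_image[OF inj])
      then show ?thesis by (simp add: I_def)
    qed
    ultimately show False using Tset_card by simp
  qed
  then obtain u where u: "restr a b s = (\<Sum>v\<in>Zs. (\<lambda>x. u v * v x))"
    using fv.span_finite[of Zs] unfolding Zs_def I_def by auto
  show ?thesis
  proof (intro exI ballI)
    fix x assume x: "x \<in> {a..b}"
    have "s x = restr a b s x" using x by (simp add: restr_def)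
    also have "\<dots> = (\<Sum>i\<in>I. u (Z i) * Z i x)"
      unfolding u Zs_def sum_fun_apply by (subst sum.reindex[OF inj]) simp
    finally show "s x = (\<Sum>i\<in>{- int k..int g - 1}. u (Z i) * Zfun b lam k i x)"
      using x by (simp add: Z_def restr_def I_def)
  qed
qed

end

lemma bspline_cong:
  assumes "\<forall>l. i \<le> l \<and> l \<le> i + int m \<longrightarrow> lam l = lam' l"
  shows "bspline b lam m i x = bspline b lam' m i x"
proof (cases m)
  case 0 then show ?thesis by simp
next
  case (Suc n)
  have "\<forall>i. (\<forall>l. i \<le> l \<and> l \<le> i + int (Suc n) \<longrightarrow> lam l = lam' l) \<longrightarrow> bspline b lam (Suc n) i x = bspline b lam' (Suc n) i x"
  proof (induction n)
    case 0 then show ?case by simp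
  next
    case (Suc n)
    show ?case
    proof (intro allI impI)
      fix i assume h: "\<forall>l. i \<le> l \<and> l \<le> i + int (Suc (Suc n)) \<longrightarrow> lam l = lam' l"
      have r1: "bspline b lam (Suc n) i x = bspline b lam' (Suc n) i x"
        using Suc.IH h by simp
      have r2: "bspline b lam (Suc n) (i+1) x = bspline b lam' (Suc n) (i+1) x"
        using Suc.IH h by simp
      have e: "lam i = lam' i" "lam (i+1) = lam' (i+1)" "lam (i + int (Suc n)) = lam' (i + int (Suc n))"
        "lam (i + int (Suc n) + 1) = lam' (i + int (Suc n) + 1)" using h by auto
      show "bspline b lam (Suc (Suc n)) i x = bspline b lam' (Suc (Suc n)) i x"
        by (simp only: bspline.simps r1 r2 e)
    qed
  qed
  then show ?thesis using assms Suc by blast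
qed

theorem theorem2:
  fixes k g :: nat and a b :: real and lam :: "int \<Rightarrow> real"
  assumes "k \<ge> 1"
    and "a < b"
    and "lam 0 = a" and "lam (int g + 1) = b"
    and "\<forall>i::int. 0 \<le> i \<and> i \<le> int g \<longrightarrow> lam i < lam (i + 1)"
    and "\<forall>i::int. - int k \<le> i \<and> i \<le> 0 \<longrightarrow> lam i = a"
    and "\<forall>i::int. int g + 1 \<le> i \<and> i \<le> int g + int k + 1 \<longrightarrow> lam i = b"
  shows "(\<forall>i \<in> {- int k .. int g - 1}. Zfun b lam k i \<in> zero_int_spline_space k g lam a b)
    \<and> (\<forall>c :: int \<Rightarrow> real.
          (\<forall>x\<in>{a..b}. (\<Sum>i \<in> {- int k .. int g - 1}. c i * Zfun b lam k i x) = 0)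
          \<longrightarrow> (\<forall>i \<in> {- int k .. int g - 1}. c i = 0))
    \<and> (\<forall>s \<in> zero_int_spline_space k g lam a b. \<exists>c :: int \<Rightarrow> real.
          \<forall>x\<in>{a..b}. s x = (\<Sum>i \<in> {- int k .. int g - 1}. c i * Zfun b lam k i x))"
proof -
  define lam' where "lam' i = (if i \<le> 0 then a else if int g + 1 \<le> i then b else lam i)" for i
  have agree: "\<forall>l. - int k \<le> l \<and> l \<le> int g + int k + 1 \<longrightarrow> lam l = lam' l"
    using assms(6,7) by (auto simp: lam'_def)
  interpret L: knotsk lam' g a b k
  proof
    show "\<And>i. i \<le> 0 \<Longrightarrow> lam' i = a" by (simp add: lam'_def)
    show "\<And>i. int g + 1 \<le> i \<Longrightarrow> lam' i = b" by (simp add: lam'_def)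
    show "1 \<le> k" using assms(1) .
    fix i :: int assume i: "0 \<le> i" "i \<le> int g"
    have "lam' i = lam i" using i assms(3) by (auto simp: lam'_def)
    moreover have "lam' (i+1) = lam (i+1)" using i assms(4) by (auto simp: lam'_def)
    ultimately show "lam' i < lam' (i+1)" using assms(5) i by simp
  qed
  have Zeq: "Zfun b lam k i = Zfun b lam' k i" if i: "i \<in> {- int k..int g - 1}" for i
  proof -
    have "bspline b lam (k+1) i x = bspline b lam' (k+1) i x" for x
      by (rule bspline_cong) (use agree i in auto)
    moreover have "bspline b lam (k+1) (i+1) x = bspline b lam' (k+1) (i+1) x" for x
      by (rule bspline_cong) (use agree i in auto)
    moreover have "lam (i + int k + 1) = lam' (i + int k + 1)" "lam i = lam' i"
      "lam (i + int k + 2) = lam' (i + int k + 2)" "lam (i + 1) = lam' (i + 1)"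
      using agree i by auto
    ultimately show ?thesis unfolding Zfun_def by simp
  qed
  have sp_eq: "spline_space k g lam a b = spline_space k g lam' a b"
  proof -
    have e: "\<And>i. 0 \<le> i \<and> i \<le> int g \<Longrightarrow> {lam i..lam (i+1)} = {lam' i..lam' (i+1)}"
    proof -
      fix i :: int assume "0 \<le> i \<and> i \<le> int g"
      then have "lam i = lam' i" "lam (i+1) = lam' (i+1)" using agree by auto
      then show "{lam i..lam (i+1)} = {lam' i..lam' (i+1)}" by simp
    qed
    have "(\<forall>i. 0 \<le> i \<and> i \<le> int g \<longrightarrow> (\<exists>p. degree p \<le> k \<and> (\<forall>x\<in>{lam i..lam (i+1)}. s x = poly p x)))
      \<longleftrightarrow> (\<forall>i. 0 \<le> i \<and> i \<le> int g \<longrightarrow> (\<exists>p. degree p \<le> k \<and> (\<forall>x\<in>{lam' i..lam' (i+1)}. s x = poly p x)))" for s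
    proof (intro iffI allI impI)
      fix i assume "\<forall>i. 0 \<le> i \<and> i \<le> int g \<longrightarrow> (\<exists>p. degree p \<le> k \<and> (\<forall>x\<in>{lam i..lam (i+1)}. s x = poly p x))"
        and i: "0 \<le> i \<and> i \<le> int g"
      then have "\<exists>p. degree p \<le> k \<and> (\<forall>x\<in>{lam i..lam (i+1)}. s x = poly p x)" using i by blast
      then show "\<exists>p. degree p \<le> k \<and> (\<forall>x\<in>{lam' i..lam' (i+1)}. s x = poly p x)" unfolding e[OF i] .
    next
      fix i assume "\<forall>i. 0 \<le> i \<and> i \<le> int g \<longrightarrow> (\<exists>p. degree p \<le> k \<and> (\<forall>x\<in>{lam' i..lam' (i+1)}. s x = poly p x))"
        and i: "0 \<le> i \<and> i \<le> int g"
      then have "\<exists>p. degree p \<le> k \<and> (\<forall>x\<in>{lam' i..lam' (i+1)}. s x = poly p x)" using i by blast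
      then show "\<exists>p. degree p \<le> k \<and> (\<forall>x\<in>{lam i..lam (i+1)}. s x = poly p x)" unfolding e[OF i] .
    qed
    then show ?thesis unfolding spline_space_def by simp
  qed
  have zeq: "zero_int_spline_space k g lam a b = zero_int_spline_space k g lam' a b"
    unfolding zero_int_spline_space_def sp_eq ..
  have sumeq: "(\<Sum>i\<in>{- int k..int g - 1}. c i * Zfun b lam k i x) = (\<Sum>i\<in>{- int k..int g - 1}. c i * Zfun b lam' k i x)" for c x
    by (rule sum.cong) (use Zeq in auto)
  show ?thesis
  proof (intro conjI ballI allI impI)
    fix i assume i: "i \<in> {- int k..int g - 1}"
    show "Zfun b lam k i \<in> zero_int_spline_space k g lam a b"
      unfolding zeq Zeq[OF i] using L.Zfun_zero_int i by simp
  next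
    fix c :: "int \<Rightarrow> real" and i
    assume h: "\<forall>x\<in>{a..b}. (\<Sum>i\<in>{- int k..int g - 1}. c i * Zfun b lam k i x) = 0" and i: "i \<in> {- int k..int g - 1}"
    show "c i = 0" using L.Zfun_indep[of c] h i unfolding sumeq by blast
  next
    fix s assume "s \<in> zero_int_spline_space k g lam a b"
    then obtain c where "\<forall>x\<in>{a..b}. s x = (\<Sum>i\<in>{- int k..int g - 1}. c i * Zfun b lam' k i x)"
      using L.span_final unfolding zeq by blast
    then show "\<exists>c. \<forall>x\<in>{a..b}. s x = (\<Sum>i\<in>{- int k..int g - 1}. c i * Zfun b lam k i x)"
      unfolding sumeq by blast
  qed
qed

end
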